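(* Assume the function $\psi$ below satisfies in addition $\psi(t)=1$ for $t\in[\frac34,1]$. Then there exists a bounded continuous function $m\colon(0,\infty)\to\mathbb{C}$ such that $\sup_{k\in\mathbb{Z}}\|\mathcal{F}(m\psi_k)\|_1<\infty$, but $T_m$ is not a bounded Fourier multiplier on $H^1(\mathbb{R})$ (i.e. $T_m\notin\mathcal{M}(H^1(\mathbb{R}))$).
   Context: Fourier transform $\widehat f(u)=\int f(t)e^{-itu}dt$. $\psi$ is a Schwartz function with $\mathrm{supp}\,\psi\subset[\frac12,2]$, $\psi\ge0$, and $\psi(t)+\psi(t/2)=1$ for $t\in[1,2]$; $\psi_k(t)=\psi(2^{-k}t)$ for $k\in\mathbb{Z}$ (so $m\psi_k$ is a function on $(0,\infty)$, extended by $0$ to $\mathbb{R}$). $H^1(\mathbb{R})=\{h\in L^1:\widehat h(u)=0\ \forall u\le0\}$, $H^2(\mathbb{R})=\{h\in L^2:\widehat h=0\text{ a.e. on }(-\infty,0]\}$. For $m\in L^\infty(0,\infty)$, $T_mh=\mathcal{F}^{-1}(m\widehat h)$ on $H^2(\mathbb{R})$; $T_m$ is a bounded Fourier multiplier on $H^1(\mathbb{R})$ if $\|T_mh\|_1\le C\|h\|_1$ for all $h\in H^1(\mathbb{R})\cap H^2(\mathbb{R})$. *)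

theory Defs
  imports "HOL-Analysis.Analysis"
begin

definition fourier :: "(real \<Rightarrow> complex) \<Rightarrow> real \<Rightarrow> complex" where
  "fourier f u = (LINT t|lborel. f t * exp (- \<i> * complex_of_real (t * u)))"

definition L1norm :: "(real \<Rightarrow> complex) \<Rightarrow> ennreal" where
  "L1norm f = (\<integral>\<^sup>+ t. ennreal (norm (f t)) \<partial>lborel)"

definition L1 :: "(real \<Rightarrow> complex) \<Rightarrow> bool" where
  "L1 f \<longleftrightarrow> integrable lborel f"

definition L2 :: "(real \<Rightarrow> complex) \<Rightarrow> bool" where
  "L2 f \<longleftrightarrow> f \<in> borel_measurable lborel \<and> integrable lborel (\<lambda>t. (norm (f t))\<^sup>2)"

definition smooth_fun :: "(real \<Rightarrow> real) \<Rightarrow> bool" where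
  "smooth_fun f \<longleftrightarrow> (\<forall>k. \<forall>x. ((deriv ^^ k) f) differentiable (at x))"

definition schwartz :: "(real \<Rightarrow> real) \<Rightarrow> bool" where
  "schwartz f \<longleftrightarrow> smooth_fun f \<and>
     (\<forall>n k. bounded (range (\<lambda>t. \<bar>t\<bar> ^ n * \<bar>(deriv ^^ k) f t\<bar>)))"

definition admissible_psi :: "(real \<Rightarrow> real) \<Rightarrow> bool" where
  "admissible_psi \<psi> \<longleftrightarrow> schwartz \<psi>
     \<and> (\<forall>t. \<psi> t \<noteq> 0 \<longrightarrow> t \<in> {1/2..2})
     \<and> (\<forall>t. \<psi> t \<ge> 0)
     \<and> (\<forall>t\<in>{1..2}. \<psi> t + \<psi> (t/2) = 1)"

definition psi_k :: "(real \<Rightarrow> real) \<Rightarrow> int \<Rightarrow> real \<Rightarrow> real" where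
  "psi_k \<psi> k t = \<psi> ((2 powr (- real_of_int k)) * t)"

definition m_psi_k :: "(real \<Rightarrow> complex) \<Rightarrow> (real \<Rightarrow> real) \<Rightarrow> int \<Rightarrow> real \<Rightarrow> complex" where
  "m_psi_k m \<psi> k t = (if t > 0 then m t * complex_of_real (psi_k \<psi> k t) else 0)"

definition H1_H2 :: "(real \<Rightarrow> complex) \<Rightarrow> bool" where
  "H1_H2 h \<longleftrightarrow> L1 h \<and> L2 h \<and> (\<forall>u\<le>0. fourier h u = 0)"

text \<open>g = T_m h = F^{-1}(m hat h), characterised weakly: g is in L^2 and
  int g(x) hat phi(x) dx = int_{u>0} m(u) hat h(u) phi(u) du for all phi in L^1 \<inter> L^2
  (Parseval); this determines g in L^2 uniquely.\<close>
definition is_Tm :: "(real \<Rightarrow> complex) \<Rightarrow> (real \<Rightarrow> complex) \<Rightarrow> (real \<Rightarrow> complex) \<Rightarrow> bool" where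
  "is_Tm m h g \<longleftrightarrow> L2 g \<and>
     (\<forall>\<phi>. L1 \<phi> \<and> L2 \<phi> \<longrightarrow>
        (LINT x|lborel. g x * fourier \<phi> x) =
        (LINT u|lborel. indicator {0<..} u * m u * fourier h u * \<phi> u))"

definition bounded_H1_multiplier :: "(real \<Rightarrow> complex) \<Rightarrow> bool" where
  "bounded_H1_multiplier m \<longleftrightarrow>
     (\<exists>C::real. \<forall>h g. H1_H2 h \<and> is_Tm m h g \<longrightarrow> L1norm g \<le> ennreal C * L1norm h)"

end

theory Submission
  imports Defs "HOL-Probability.Sinc_Integral"
begin

definition Dm :: "real \<Rightarrow> real" where "Dm x = inverse (1 + x^2)"

lemma integrable_Dm: "integrable lborel Dm"
  using integrable_inverse_1_plus_square unfolding set_integrable_def Dm_def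
  by simp

lemma fourier_swap:
  fixes g \<phi> :: "real \<Rightarrow> complex"
  assumes g: "integrable lborel g" and p: "integrable lborel \<phi>"
  shows "(LINT x|lborel. g x * fourier \<phi> x) = (LINT t|lborel. fourier g t * \<phi> t)"
proof -
  have gm[measurable]: "g \<in> borel_measurable borel" using g by auto
  have pm[measurable]: "\<phi> \<in> borel_measurable borel" using p by auto
  let ?F = "\<lambda>x t. g x * (\<phi> t * exp (- \<i> * complex_of_real (t * x)))"
  have int: "integrable (lborel \<Otimes>\<^sub>M lborel) (case_prod ?F)"
  proof (subst integrable_iff_bounded, safe)
    show "case_prod ?F \<in> borel_measurable (lborel \<Otimes>\<^sub>M lborel)" by measurable
    have "(\<integral>\<^sup>+ z. ennreal (norm (case_prod ?F z)) \<partial>(lborel \<Otimes>\<^sub>M lborel))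
        = (\<integral>\<^sup>+ z. ennreal (norm (g (fst z))) * ennreal (norm (\<phi> (snd z))) \<partial>(lborel \<Otimes>\<^sub>M lborel))"
      by (intro nn_integral_cong) (auto simp: norm_mult ennreal_mult split: prod.splits)
    also have "\<dots> = (\<integral>\<^sup>+ x. \<integral>\<^sup>+ t. ennreal (norm (g x)) * ennreal (norm (\<phi> t)) \<partial>lborel \<partial>lborel)"
      using sigma_finite_measure.nn_integral_fst[OF sigma_finite_lborel, of "\<lambda>z. ennreal (norm (g (fst z))) * ennreal (norm (\<phi> (snd z)))" lborel] by simp
    also have "\<dots> = (\<integral>\<^sup>+ x. ennreal (norm (g x)) \<partial>lborel) * (\<integral>\<^sup>+ t. ennreal (norm (\<phi> t)) \<partial>lborel)"
      by (simp add: nn_integral_cmult nn_integral_multc)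
    also have "\<dots> < \<infinity>" using g p by (simp add: integrable_iff_bounded ennreal_mult_less_top)
    finally show "(\<integral>\<^sup>+ z. ennreal (norm (case_prod ?F z)) \<partial>(lborel \<Otimes>\<^sub>M lborel)) < \<infinity>" .
  qed
  have "(LINT x|lborel. g x * fourier \<phi> x) = (LINT x|lborel. LINT t|lborel. ?F x t)"
    unfolding fourier_def by (simp add: mult.assoc)
  also have "\<dots> = (LINT t|lborel. LINT x|lborel. ?F x t)"
    using lborel_pair.Fubini_integral[OF int] by simp
  also have "\<dots> = (LINT t|lborel. fourier g t * \<phi> t)"
    unfolding fourier_def
    by (intro Bochner_Integration.integral_cong refl)
       (simp add: integral_mult_left_zero[symmetric] mult.commute mult.left_commute)
  finally show ?thesis .
qed

lemma exp_mi: "exp (- \<i> * complex_of_real y) = complex_of_real (cos y) - \<i> * complex_of_real (sin y)"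
proof -
  have "exp (- \<i> * complex_of_real y) = cis (- y)" by (simp add: cis_conv_exp)
  also have "\<dots> = complex_of_real (cos y) - \<i> * complex_of_real (sin y)"
    by (simp add: complex_eq_iff)
  finally show ?thesis .
qed

definition Sf :: "real \<Rightarrow> real" where "Sf x = (sin x / x)^2"
definition Cb :: "real \<Rightarrow> real \<Rightarrow> real" where "Cb b x = (1 - cos (b*x)) / x^2"

lemma sq_ge1: "\<not> \<bar>x::real\<bar> \<le> 1 \<Longrightarrow> 1 \<le> x^2"
proof -
  assume "\<not> \<bar>x::real\<bar> \<le> 1"
  then have "1 \<le> \<bar>x\<bar>^2" by (intro one_le_power) simp
  then show ?thesis by simp
qed

lemma sq_le1: "\<bar>x::real\<bar> \<le> 1 \<Longrightarrow> x^2 \<le> 1"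
  by (simp add: abs_square_le_1)

lemma Dm_pos: "Dm x > 0" unfolding Dm_def by (simp add: add_pos_nonneg)

lemma Sf_nonneg: "0 \<le> Sf x" unfolding Sf_def by simp

lemma Sf_le1: "Sf x \<le> 1"
proof (cases "x = 0")
  case False
  have "\<bar>sin x\<bar> / \<bar>x\<bar> \<le> \<bar>x\<bar> / \<bar>x\<bar>"
    by (rule divide_right_mono[OF abs_sin_x_le_abs_x]) simp
  then have "\<bar>sin x / x\<bar> \<le> 1" using False by (simp add: abs_divide)
  then show ?thesis unfolding Sf_def by (rule sq_le1)
qed (simp add: Sf_def)

lemma Dm_ge: "x^2 \<le> 1 \<Longrightarrow> 1 \<le> 2 * Dm x"
proof -
  assume "x^2 \<le> 1"
  then have "1 + x^2 \<le> 2" by simp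
  moreover have "0 < 1 + x^2" by (simp add: add_pos_nonneg)
  ultimately show ?thesis unfolding Dm_def by (simp add: divide_simps)
qed

lemma Dm_ge2: "1 \<le> x^2 \<Longrightarrow> 1 / x^2 \<le> 2 * Dm x"
proof -
  assume a: "1 \<le> x^2"
  then have "1 + x^2 \<le> 2 * x^2" by simp
  moreover have "0 < 1 + x^2" by (simp add: add_pos_nonneg)
  moreover have "0 < x^2" using a by linarith
  ultimately show ?thesis unfolding Dm_def by (simp add: divide_simps)
qed

lemma Sf_le_Dm: "Sf x \<le> 2 * Dm x"
proof (cases "\<bar>x\<bar> \<le> 1")
  case True
  then show ?thesis using Sf_le1[of x] Dm_ge[OF sq_le1[OF True]] by linarith
next
  case False
  then have x0: "x \<noteq> 0" and x1: "1 \<le> x^2" using sq_ge1 by auto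
  have "Sf x = (sin x)^2 / x^2" unfolding Sf_def by (simp add: power_divide)
  also have "\<dots> \<le> 1 / x^2" by (intro divide_right_mono) (auto simp: abs_square_le_1)
  also have "\<dots> \<le> 2 * Dm x" using x1 by (rule Dm_ge2)
  finally show ?thesis .
qed

lemma one_minus_cos_le: "1 - cos (y::real) \<le> y^2 / 2"
proof -
  have "cos y = cos (2 * (y/2))" by (simp add: mult.commute)
  also have "\<dots> = 1 - 2 * sin (y/2) ^ 2" by (rule cos_double_sin)
  finally have "1 - cos y = 2 * sin (y/2) ^ 2" by simp
  also have "\<dots> \<le> 2 * (y/2)^2"
    using power_mono[OF abs_sin_x_le_abs_x[of "y/2"], of 2] by (simp add: power_divide)
  finally show ?thesis by (simp add: power_divide)
qed

lemma Cb_nonneg: "0 \<le> Cb b x" unfolding Cb_def by simp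

lemma Cb_le: "Cb b x \<le> (b^2 + 4) * Dm x"
proof (cases "x = 0")
  case True then show ?thesis by (simp add: Cb_def Dm_def)
next
  case x0: False
  show ?thesis
  proof (cases "\<bar>x\<bar> \<le> 1")
    case True
    then have "x^2 \<le> 1" by (rule sq_le1)
    have "Cb b x \<le> ((b*x)^2/2) / x^2" unfolding Cb_def
      by (intro divide_right_mono one_minus_cos_le) simp
    also have "\<dots> = b^2 / 2" using x0 by (simp add: field_simps)
    also have "\<dots> \<le> (b^2 + 4) * Dm x"
    proof -
      have "b^2/2 * (1 + x^2) \<le> b^2/2 * 2"
        by (rule mult_left_mono) (use \<open>x^2 \<le> 1\<close> in auto)
      then have "b^2/2 * (1 + x^2) \<le> b^2 + 4" by simp
      then show ?thesis unfolding Dm_def by (simp add: field_simps add_pos_nonneg)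
    qed
    finally show ?thesis .
  next
    case False
    then have x1: "1 \<le> x^2" by (rule sq_ge1)
    have "1 - cos (b*x) \<le> 2" using cos_ge_minus_one[of "b*x"] by linarith
    then have "Cb b x \<le> 2 / x^2" unfolding Cb_def
      by (intro divide_right_mono) auto
    also have "\<dots> = 2 * (1 / x^2)" by simp
    also have "\<dots> \<le> 2 * (2 * Dm x)" using Dm_ge2[OF x1] by simp
    also have "\<dots> = 4 * Dm x" by simp
    also have "\<dots> \<le> (b^2 + 4) * Dm x" using Dm_pos[of x]
      by (intro mult_right_mono) auto
    finally show ?thesis .
  qed
qed

lemma Sf_meas[measurable]: "Sf \<in> borel_measurable borel"
  unfolding Sf_def by measurable

lemma Cb_meas[measurable]: "Cb b \<in> borel_measurable borel"
  unfolding Cb_def by measurable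

lemma Dm_meas[measurable]: "Dm \<in> borel_measurable borel"
  unfolding Dm_def by measurable

lemma integrable_Sf: "integrable lborel Sf"
  by (rule Bochner_Integration.integrable_bound[where f="\<lambda>x. 2 * Dm x"]) (auto intro: integrable_Dm simp: Sf_le_Dm Sf_nonneg Dm_pos less_imp_le)

lemma integrable_Cb: "integrable lborel (Cb b)"
  by (rule Bochner_Integration.integrable_bound[where f="\<lambda>x. (b^2 + 4) * Dm x"])
     (auto intro!: integrable_Dm simp: Cb_le Cb_nonneg Dm_pos less_imp_le add_nonneg_nonneg)

definition Jc :: "real \<Rightarrow> real" where "Jc b = (LINT x|lborel. Cb b x)"

lemma Cb_scaled:
  assumes b: "b \<noteq> 0" shows "Cb b (x / \<bar>b\<bar>) = b^2 * Cb 1 x"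
proof -
  have "b * x / \<bar>b\<bar> = x \<or> b * x / \<bar>b\<bar> = -x"
  proof (cases "b > 0")
    case True then show ?thesis by simp
  next
    case False then have "\<bar>b\<bar> = -b" by simp
    then show ?thesis using b by simp
  qed
  then have c: "cos (b * x / \<bar>b\<bar>) = cos x" by auto
  have sq: "(x / \<bar>b\<bar>)^2 = x^2 / b^2" by (simp add: power_divide)
  have "Cb b (x / \<bar>b\<bar>) = (1 - cos (b * x / \<bar>b\<bar>)) / (x / \<bar>b\<bar>)^2" unfolding Cb_def by simp
  also have "\<dots> = (1 - cos x) / (x^2 / b^2)" unfolding c sq ..
  also have "\<dots> = (1 - cos x) * b^2 / x^2" by (rule divide_divide_eq_right)
  also have "\<dots> = b^2 * Cb 1 x" unfolding Cb_def by simp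
  finally show ?thesis .
qed

lemma Jc_scale: "Jc b = \<bar>b\<bar> * Jc 1"
proof (cases "b = 0")
  case True then show ?thesis by (simp add: Jc_def Cb_def)
next
  case False
  have c: "1 / \<bar>b\<bar> \<noteq> 0" using False by simp
  have "Jc b = \<bar>1 / \<bar>b\<bar>\<bar> *\<^sub>R (LINT x|lborel. Cb b (0 + (1/\<bar>b\<bar>) * x))"
    unfolding Jc_def by (rule lborel_integral_real_affine[OF c])
  also have "\<dots> = (1 / \<bar>b\<bar>) * (LINT x|lborel. Cb b (x / \<bar>b\<bar>))"
    by simp
  also have "\<dots> = (1 / \<bar>b\<bar>) * (LINT x|lborel. b^2 * Cb 1 x)"
    by (simp add: Cb_scaled[OF False])
  also have "\<dots> = (1 / \<bar>b\<bar>) * b^2 * Jc 1" unfolding Jc_def by simp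
  also have "(1 / \<bar>b\<bar>) * b^2 = \<bar>b\<bar>"
  proof -
    show ?thesis
    proof (cases "b > 0")
      case True then show ?thesis by (simp add: power2_eq_square)
    next
      case nb: False
      then have "\<bar>b\<bar> = -b" by simp
      then show ?thesis using False by (simp add: power2_eq_square)
    qed
  qed
  finally show ?thesis .
qed

lemma Sf_even: "Sf (-x) = Sf x" unfolding Sf_def by simp

lemma trig_id: "4 * (sin (x::real) ^ 2 * cos ((l::real) * x)) = (1 - cos ((l+2)*x)) + (1 - cos ((l-2)*x)) - 2 * (1 - cos (l*x))"
proof -
  have e1: "cos ((l+2)*x) = cos (l*x) * cos (2*x) - sin (l*x) * sin (2*x)"
    by (subst distrib_right) (rule cos_add)
  have e2: "cos ((l-2)*x) = cos (l*x) * cos (2*x) + sin (l*x) * sin (2*x)"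
    by (subst left_diff_distrib) (rule cos_diff)
  have e3: "cos (2*x) = 1 - 2 * sin x ^ 2" by (rule cos_double_sin)
  show ?thesis unfolding e1 e2 e3 by (simp add: algebra_simps)
qed

lemma Sf_cos_id: "Sf x * cos (x * l) = (Cb (l+2) x + Cb (l-2) x - 2 * Cb l x) / 4"
proof -
  have "Sf x * cos (x * l) = (4 * (sin x ^ 2 * cos (l * x))) / x^2 / 4"
    unfolding Sf_def by (simp add: power_divide mult.commute)
  also have "\<dots> = (Cb (l+2) x + Cb (l-2) x - 2 * Cb l x) / 4"
    unfolding trig_id Cb_def by (simp add: diff_divide_distrib add_divide_distrib)
  finally show ?thesis .
qed

lemma integrable_Sf_mult:
  assumes "\<And>x. \<bar>h x\<bar> \<le> 1" and [measurable]: "h \<in> borel_measurable borel"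
  shows "integrable lborel (\<lambda>x. Sf x * h x)"
  by (rule Bochner_Integration.integrable_bound[where f=Sf])
     (auto intro!: integrable_Sf simp: abs_mult Sf_nonneg assms mult_left_le)

lemma Sf_sin_zero: "(LINT x|lborel. Sf x * sin (x * l)) = 0"
proof -
  let ?I = "LINT x|lborel. Sf x * sin (x * l)"
  have "?I = \<bar>-1\<bar> *\<^sub>R (LINT x|lborel. Sf (0 + -1 * x) * sin ((0 + -1 * x) * l))"
    by (rule lborel_integral_real_affine) simp
  also have "\<dots> = - ?I" by (simp add: Sf_even)
  finally show ?thesis by simp
qed

lemma Sf_cos_int: "(LINT x|lborel. Sf x * cos (x * l)) = (Jc (l+2) + Jc (l-2) - 2 * Jc l) / 4"
  unfolding Sf_cos_id Jc_def
  by (simp add: integrable_Cb)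

definition FS :: "real \<Rightarrow> complex" where "FS = fourier (\<lambda>x. complex_of_real (Sf x))"

lemma FS_eq: "FS l = complex_of_real (LINT x|lborel. Sf x * cos (x * l))"
proof -
  have c1: "integrable lborel (\<lambda>x. Sf x * cos (x*l))"
    by (rule integrable_Sf_mult[OF abs_cos_le_one]) measurable
  have s1: "integrable lborel (\<lambda>x. Sf x * sin (x*l))"
    by (rule integrable_Sf_mult[OF abs_sin_le_one]) measurable
  have c2: "complex_integrable lborel (\<lambda>x. complex_of_real (Sf x * cos (x*l)))"
    using complex_of_real_integrable_eq[of lborel "\<lambda>x. Sf x * cos (x*l)"] c1 by blast
  have s2: "complex_integrable lborel (\<lambda>x. \<i> * complex_of_real (Sf x * sin (x*l)))"
    using complex_of_real_integrable_eq[of lborel "\<lambda>x. Sf x * sin (x*l)"] s1 by (intro integrable_mult_right) blast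
  have "FS l = (LINT x|lborel. complex_of_real (Sf x * cos (x * l)) - \<i> * complex_of_real (Sf x * sin (x * l)))"
    unfolding FS_def fourier_def exp_mi by (simp add: algebra_simps)
  also have "\<dots> = complex_of_real (LINT x|lborel. Sf x * cos (x * l)) - \<i> * complex_of_real (LINT x|lborel. Sf x * sin (x * l))"
    by (subst Bochner_Integration.integral_diff[OF c2 s2]) (simp only: integral_mult_right_zero integral_complex_of_real)
  finally show ?thesis by (simp add: Sf_sin_zero)
qed

lemma FS_zero: assumes "\<bar>l\<bar> \<ge> 2" shows "FS l = 0"
proof -
  have z: "\<bar>l+2\<bar> + \<bar>l-2\<bar> - 2 * \<bar>l\<bar> = 0" using assms by auto
  have "Jc (l+2) + Jc (l-2) - 2 * Jc l = Jc 1 * (\<bar>l+2\<bar> + \<bar>l-2\<bar> - 2 * \<bar>l\<bar>)"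
    by (subst (1 2 3) Jc_scale) (simp add: algebra_simps)
  also have "\<dots> = 0" unfolding z by simp
  finally show ?thesis unfolding FS_eq Sf_cos_int by simp
qed

lemma FS_0: "FS 0 = complex_of_real (LINT x|lborel. Sf x)"
  unfolding FS_eq by simp

locale psiloc =
  fixes \<psi> :: "real \<Rightarrow> real"
  assumes adm: "admissible_psi \<psi>"
    and one: "\<forall>t\<in>{3/4..1}. \<psi> t = 1"
begin

lemma supp: "\<psi> t \<noteq> 0 \<Longrightarrow> 1/2 \<le> t \<and> t \<le> 2"
  using adm unfolding admissible_psi_def by auto

lemma out: "t < 1/2 \<or> t > 2 \<Longrightarrow> \<psi> t = 0"
  using supp by force

lemma pu: "t \<in> {1..2} \<Longrightarrow> \<psi> t + \<psi> (t/2) = 1"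
  using adm unfolding admissible_psi_def by auto

lemma le_half: assumes "t \<le> 1/2" shows "\<psi> t = 0"
proof (cases "t < 1/2")
  case True then show ?thesis using out by auto
next
  case False
  then have t: "t = 1/2" using assms by simp
  have "\<psi> 1 + \<psi> (1/2) = 1" using pu[of 1] by simp
  moreover have "\<psi> 1 = 1" using one by auto
  ultimately have "\<psi> (1/2) = 0" by simp
  then show ?thesis unfolding t .
qed

lemma ge_32: assumes "t \<ge> 3/2" shows "\<psi> t = 0"
proof (cases "t > 2")
  case True then show ?thesis using out by auto
next
  case False
  then have "\<psi> t + \<psi> (t/2) = 1" using pu[of t] assms by simp
  moreover have "\<psi> (t/2) = 1" using one False assms by auto
  ultimately show ?thesis by simp
qed

lemma supp2: "\<psi> t \<noteq> 0 \<Longrightarrow> 1/2 < t \<and> t < 3/2"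
  using le_half ge_32 by force

lemma nonpos: "t \<le> 0 \<Longrightarrow> \<psi> t = 0"
  using le_half by simp

lemma bdd: "\<exists>B. \<forall>t. \<bar>\<psi> t\<bar> \<le> B"
proof -
  have "bounded (range (\<lambda>t. \<bar>t\<bar> ^ 0 * \<bar>(deriv ^^ 0) \<psi> t\<bar>))"
    using adm unfolding admissible_psi_def schwartz_def by blast
  then obtain B where "\<forall>x\<in>range (\<lambda>t. \<bar>\<psi> t\<bar>). norm x \<le> B" by (auto simp: bounded_iff)
  then show ?thesis by auto
qed

lemma smooth: "\<And>k x. ((deriv ^^ k) \<psi>) differentiable (at x)"
  using adm unfolding admissible_psi_def schwartz_def smooth_fun_def by blast

lemma d0: "(\<psi> has_real_derivative deriv \<psi> x) (at x)"
  using smooth[of 0 x] by (simp add: DERIV_deriv_iff_real_differentiable)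

lemma d1: "(deriv \<psi> has_real_derivative deriv (deriv \<psi>) x) (at x)"
  using smooth[of 1 x] by (simp add: DERIV_deriv_iff_real_differentiable)

lemma d2_cont: "isCont (deriv (deriv \<psi>)) x"
  using smooth[of 2 x] by (simp add: numeral_2_eq_2 differentiable_imp_continuous_within)

lemma cont: "isCont \<psi> x"
  using d0 by (rule DERIV_isCont)

lemma d0_out: assumes "t < 1/2 \<or> t > 2" shows "deriv \<psi> t = 0"
proof -
  have "(\<psi> has_real_derivative 0) (at t)"
  proof (rule has_field_derivative_transform_within_open[where f="\<lambda>_. 0" and S="{..<1/2} \<union> {2<..}"])
    show "((\<lambda>_. 0) has_real_derivative 0) (at t)" by simp
    show "open ({..<1/2} \<union> {2<..} :: real set)" by auto
    show "t \<in> {..<1/2} \<union> {2<..}" using assms by auto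
    show "\<And>x. x \<in> {..<1/2} \<union> {2<..} \<Longrightarrow> 0 = \<psi> x" using out by auto
  qed
  then show ?thesis using d0 DERIV_unique by blast
qed

end

context psiloc begin

lemma pk_eq: "psi_k \<psi> j u = \<psi> (2 powr (- real_of_int j) * u)"
  unfolding psi_k_def ..

lemma pk_supp:
  assumes "psi_k \<psi> j u \<noteq> 0"
  shows "0 < u \<and> 2 powr (real_of_int j - 1) < u \<and> u < 2 powr (real_of_int j + 1)"
proof -
  let ?s = "2 powr (- real_of_int j) * u"
  have s: "1/2 < ?s" "?s < 3/2" using supp2 assms unfolding pk_eq by auto
  have u: "u = 2 powr (real_of_int j) * ?s"
    by (simp add: powr_minus)
  have p: "2 powr (real_of_int j) > 0" by simp
  have "u > 2 powr (real_of_int j) * (1/2)" using s(1) p u by (metis mult_strict_left_mono)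
  moreover have "2 powr (real_of_int j - 1) = 2 powr (real_of_int j) * (1/2)"
    by (simp add: powr_diff)
  moreover have "u < 2 powr (real_of_int j) * 2"
  proof -
    have "?s < 2" using s(2) by simp
    then show ?thesis using p u by (metis mult_strict_left_mono)
  qed
  moreover have "2 powr (real_of_int j + 1) = 2 powr (real_of_int j) * 2"
    by (simp add: powr_add)
  ultimately show ?thesis using p by linarith
qed

lemma pk_log:
  assumes "psi_k \<psi> j u \<noteq> 0"
  shows "0 < u \<and> real_of_int j - 1 < log 2 u \<and> log 2 u < real_of_int j + 1"
proof -
  note h = pk_supp[OF assms]
  have "real_of_int j - 1 < log 2 u" using h by (subst less_log_iff) auto
  moreover have "log 2 u < real_of_int j + 1" using h by (subst log_less_iff) auto
  ultimately show ?thesis using h by auto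
qed

definition W :: "real \<Rightarrow> int set" where "W u = {\<lfloor>log 2 u\<rfloor> - 1 .. \<lfloor>log 2 u\<rfloor> + 1}"

definition fj :: "(int \<Rightarrow> real) \<Rightarrow> int \<Rightarrow> real \<Rightarrow> complex" where
  "fj a j u = exp (- \<i> * complex_of_real (a j * u)) * complex_of_real (psi_k \<psi> j u)"

definition mm :: "(int \<Rightarrow> real) \<Rightarrow> real \<Rightarrow> complex" where
  "mm a u = (\<Sum>j\<in>W u. fj a j u)"

lemma pk_W: assumes "psi_k \<psi> j u \<noteq> 0" shows "j \<in> W u"
proof -
  note h = pk_log[OF assms]
  have "j - 1 \<le> \<lfloor>log 2 u\<rfloor>" using h by (simp add: le_floor_iff)
  moreover have "\<lfloor>log 2 u\<rfloor> \<le> j + 1" using h by (simp add: floor_le_iff)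
  ultimately show ?thesis unfolding W_def by auto
qed

lemma fj_zero: "psi_k \<psi> j u = 0 \<Longrightarrow> fj a j u = 0"
  unfolding fj_def by simp

lemma mm_sum:
  assumes F: "finite F" and sub: "\<And>j. psi_k \<psi> j u \<noteq> 0 \<Longrightarrow> j \<in> F"
  shows "mm a u = (\<Sum>j\<in>F. fj a j u)"
proof -
  have fW: "finite (W u)" unfolding W_def by simp
  have "mm a u = (\<Sum>j\<in>W u \<union> F. fj a j u)"
    unfolding mm_def
    by (rule sum.mono_neutral_left) (use fW F sub pk_W fj_zero in force)+
  also have "\<dots> = (\<Sum>j\<in>F. fj a j u)"
    by (rule sum.mono_neutral_right) (use fW F sub pk_W fj_zero in force)+
  finally show ?thesis .
qed

lemma pk_cont: "isCont (psi_k \<psi> j) x"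
  unfolding psi_k_def by (rule isCont_o2[where g=\<psi>]) (auto intro: cont)

lemma mm_cont: "continuous_on {0<..} (mm a)"
proof (rule continuous_at_imp_continuous_on, intro ballI)
  fix u0 :: real assume "u0 \<in> {0<..}"
  then have u0: "u0 > 0" by simp
  define F0 where "F0 = {\<lfloor>log 2 u0\<rfloor> - 2 .. \<lfloor>log 2 u0\<rfloor> + 2}"
  have ev: "eventually (\<lambda>u. mm a u = (\<Sum>j\<in>F0. fj a j u)) (nhds u0)"
    unfolding eventually_nhds_metric
  proof (intro exI[of _ "u0/2"] conjI allI impI)
    show "u0/2 > 0" using u0 by simp
    fix u assume "dist u u0 < u0/2"
    then have "\<bar>u - u0\<bar> < u0/2" by (simp add: dist_real_def)
    then have "-(u0/2) < u - u0 \<and> u - u0 < u0/2" by (simp only: abs_less_iff) auto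
    then have u1: "u0/2 < u" and u2: "u < 2 * u0" using u0 by linarith+
    have up: "u > 0" using u1 u0 by linarith
    have l1: "log 2 u0 - 1 < log 2 u"
    proof -
      have "log 2 (u0/2) < log 2 u" using u1 u0 by simp
      moreover have "log 2 (u0/2) = log 2 u0 - 1" using u0 by (simp add: log_divide)
      ultimately show ?thesis by simp
    qed
    have l2: "log 2 u < log 2 u0 + 1"
    proof -
      have "log 2 u < log 2 (2 * u0)" using u2 up u0 by simp
      moreover have "log 2 (2 * u0) = log 2 u0 + 1" using u0 by (simp add: log_mult)
      ultimately show ?thesis by simp
    qed
    show "mm a u = (\<Sum>j\<in>F0. fj a j u)"
    proof (rule mm_sum)
      show "finite F0" unfolding F0_def by simp
      fix j assume "psi_k \<psi> j u \<noteq> 0"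
      note h = pk_log[OF this]
      have "\<lfloor>log 2 u0\<rfloor> - 2 \<le> j"
      proof -
        have "real_of_int j > log 2 u0 - 2" using h l1 by linarith
        then have "real_of_int (\<lfloor>log 2 u0\<rfloor> - 2) < real_of_int j" by linarith
        then show ?thesis by linarith
      qed
      moreover have "j \<le> \<lfloor>log 2 u0\<rfloor> + 2"
      proof -
        have "real_of_int j < log 2 u0 + 2" using h l2 by linarith
        then have "real_of_int j < real_of_int (\<lfloor>log 2 u0\<rfloor> + 3)" by linarith
        then show ?thesis by linarith
      qed
      ultimately show "j \<in> F0" unfolding F0_def by simp
    qed
  qed
  have "isCont (\<lambda>u. \<Sum>j\<in>F0. fj a j u) u0"
    unfolding fj_def by (intro continuous_intros pk_cont)
  then show "isCont (mm a) u0" using isCont_cong[OF ev] by simp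
qed

lemma mm_bounded: "bounded (mm a ` {0<..})"
proof -
  obtain B where B: "\<And>t. \<bar>\<psi> t\<bar> \<le> B" using bdd by blast
  have "norm (mm a u) \<le> 3 * B" for u
  proof -
    have "norm (mm a u) \<le> (\<Sum>j\<in>W u. norm (fj a j u))" unfolding mm_def by (rule norm_sum)
    also have "\<dots> \<le> (\<Sum>j\<in>W u. B)"
      by (intro sum_mono) (simp add: fj_def norm_mult psi_k_def B)
    also have "\<dots> = 3 * B" unfolding W_def by simp
    finally show ?thesis .
  qed
  then show ?thesis unfolding bounded_iff by blast
qed

lemma mm_band:
  assumes u1: "3/4 * 2 powr (real_of_int k) \<le> u" and u2: "u \<le> 2 powr (real_of_int k)"
  shows "mm a u = exp (- \<i> * complex_of_real (a k * u))"
proof -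
  let ?s = "2 powr (- real_of_int k) * u"
  have p: "2 powr (- real_of_int k) > 0" by simp
  have e: "2 powr (- real_of_int k) * 2 powr (real_of_int k) = 1" by (simp add: powr_add[symmetric])
  have s1: "3/4 \<le> ?s"
  proof -
    have "2 powr (- real_of_int k) * (3/4 * 2 powr (real_of_int k)) \<le> ?s"
      using mult_left_mono[OF u1, of "2 powr (- real_of_int k)"] p by simp
    moreover have "2 powr (- real_of_int k) * (3/4 * 2 powr (real_of_int k)) = 3/4"
      by (metis mult.left_commute e mult_1_right)
    ultimately show ?thesis by linarith
  qed
  have s2: "?s \<le> 1"
  proof -
    have "?s \<le> 2 powr (- real_of_int k) * 2 powr (real_of_int k)"
      using mult_left_mono[OF u2, of "2 powr (- real_of_int k)"] p by simp
    then show ?thesis using e by simp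
  qed
  have sj: "2 powr (- real_of_int j) * u = 2 powr (real_of_int (k - j)) * ?s" for j
    by (simp add: powr_add[symmetric] mult.assoc[symmetric])
  have only: "j = k" if "psi_k \<psi> j u \<noteq> 0" for j
  proof (rule ccontr)
    assume "j \<noteq> k"
    then consider "j > k" | "j < k" by linarith
    then show False
    proof cases
      case 1
      then have "real_of_int (k - j) \<le> -1" by simp
      then have "2 powr (real_of_int (k - j)) \<le> 2 powr (-1)" by (rule powr_mono) simp
      then have "2 powr (real_of_int (k - j)) * ?s \<le> 2 powr (-1) * 1"
        using s2 s1 by (intro mult_mono) auto
      moreover have "2 powr (-1::real) = 1/2" by (simp add: powr_minus)
      ultimately have "2 powr (- real_of_int j) * u \<le> 1/2" using sj[of j] by linarith
      then show False using that le_half unfolding pk_eq by blast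
    next
      case 2
      then have "real_of_int (k - j) \<ge> 1" by simp
      then have "2 powr (real_of_int (k - j)) \<ge> 2 powr 1" by (rule powr_mono) simp
      then have "2 powr (real_of_int (k - j)) * ?s \<ge> 2 * (3/4)"
        using s1 by (intro mult_mono) auto
      then have "2 powr (- real_of_int j) * u \<ge> 3/2" using sj[of j] by linarith
      then show False using that ge_32 unfolding pk_eq by blast
    qed
  qed
  have "mm a u = (\<Sum>j\<in>{k}. fj a j u)" by (rule mm_sum) (use only in auto)
  also have "\<dots> = fj a k u" by simp
  also have "\<dots> = exp (- \<i> * complex_of_real (a k * u))"
  proof -
    have "\<psi> ?s = 1" using one s1 s2 by auto
    then show ?thesis unfolding fj_def pk_eq by simp
  qed
  finally show ?thesis .
qed

end

definition Ef :: "real \<Rightarrow> real \<Rightarrow> complex" where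
  "Ef x v = exp (- \<i> * complex_of_real (v * x))"

lemma Ef_cont: "continuous_on S (Ef x)"
  unfolding Ef_def by (intro continuous_intros)

lemma norm_Ef[simp]: "norm (Ef x v) = 1"
  unfolding Ef_def by simp

lemma Ef_deriv: "(Ef x has_vector_derivative (- \<i> * complex_of_real x * Ef x v)) (at v within S)"
proof -
  have "((\<lambda>z. exp (- \<i> * (z * complex_of_real x))) has_field_derivative
          (exp (- \<i> * (complex_of_real v * complex_of_real x)) * (- \<i> * complex_of_real x))) (at (complex_of_real v))"
    by (auto intro!: derivative_eq_intros)
  from has_vector_derivative_real_field[OF this, of S]
  show ?thesis unfolding Ef_def by (simp add: mult.commute)
qed

lemma fourier_compact:
  fixes Q :: "real \<Rightarrow> real"
  assumes z: "\<And>v. v \<notin> {a..b} \<Longrightarrow> Q v = 0" and c: "continuous_on {a..b} Q"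
  shows "fourier (\<lambda>v. complex_of_real (Q v)) x = integral {a..b} (\<lambda>v. complex_of_real (Q v) * Ef x v)"
proof -
  have cc: "continuous_on {a..b} (\<lambda>v. complex_of_real (Q v) * Ef x v)"
    by (intro continuous_intros c Ef_cont)
  have "fourier (\<lambda>v. complex_of_real (Q v)) x = (LINT v|lborel. indicator {a..b} v *\<^sub>R (complex_of_real (Q v) * Ef x v))"
    unfolding fourier_def Ef_def
    by (intro Bochner_Integration.integral_cong refl) (auto simp: z split: split_indicator)
  also have "\<dots> = (LINT v:{a..b}|lborel. complex_of_real (Q v) * Ef x v)"
    by (simp add: set_lebesgue_integral_def)
  also have "\<dots> = integral {a..b} (\<lambda>v. complex_of_real (Q v) * Ef x v)"
    by (rule set_borel_integral_eq_integral(2)[OF borel_integrable_atLeastAtMost'[OF cc]])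
  finally show ?thesis .
qed

lemma ibp:
  fixes Q Q1 :: "real \<Rightarrow> real"
  assumes d: "\<And>v. (Q has_real_derivative Q1 v) (at v)" and c1: "continuous_on {a..b} Q1"
    and qa: "Q a = 0" and qb: "Q b = 0" and ab: "a \<le> b"
  shows "integral {a..b} (\<lambda>v. complex_of_real (Q1 v) * Ef x v) =
         \<i> * complex_of_real x * integral {a..b} (\<lambda>v. complex_of_real (Q v) * Ef x v)"
proof -
  let ?F = "\<lambda>v. complex_of_real (Q v) * Ef x v"
  let ?g1 = "\<lambda>v. complex_of_real (Q v) * (- \<i> * complex_of_real x * Ef x v)"
  let ?g2 = "\<lambda>v. complex_of_real (Q1 v) * Ef x v"
  have c0: "continuous_on {a..b} Q"
    using d by (meson DERIV_isCont continuous_at_imp_continuous_on)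
  have der: "(?F has_vector_derivative (?g1 v + ?g2 v)) (at v within {a..b})" for v
  proof -
    have "((\<lambda>v. complex_of_real (Q v)) has_vector_derivative complex_of_real (Q1 v)) (at v within {a..b})"
      by (rule has_vector_derivative_of_real) (rule has_field_derivative_at_within[OF d])
    from has_vector_derivative_mult[OF this Ef_deriv]
    show ?thesis by simp
  qed
  have "((\<lambda>v. ?g1 v + ?g2 v) has_integral (?F b - ?F a)) {a..b}"
    by (rule fundamental_theorem_of_calculus[OF ab]) (use der in auto)
  then have h: "((\<lambda>v. ?g1 v + ?g2 v) has_integral 0) {a..b}" using qa qb by simp
  have i1: "?g1 integrable_on {a..b}"
    by (intro integrable_continuous_interval continuous_intros c0 Ef_cont)
  have "((\<lambda>v. (?g1 v + ?g2 v) - ?g1 v) has_integral (0 - integral {a..b} ?g1)) {a..b}"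
    by (rule has_integral_diff[OF h integrable_integral[OF i1]])
  then have "integral {a..b} ?g2 = - integral {a..b} ?g1" by (simp add: integral_unique)
  also have "integral {a..b} ?g1 = (- \<i> * complex_of_real x) * integral {a..b} ?F"
    by (simp add: mult.left_commute[of "complex_of_real (Q _)"])
  finally show ?thesis by simp
qed

lemma fourier_C2_L1:
  fixes P P1 P2 :: "real \<Rightarrow> real"
  assumes d0: "\<And>v. (P has_real_derivative P1 v) (at v)"
    and d1: "\<And>v. (P1 has_real_derivative P2 v) (at v)"
    and c2: "\<And>v. isCont P2 v"
    and z: "\<And>v. v \<notin> {a<..<b} \<Longrightarrow> P v = 0"
    and z1: "P1 a = 0" "P1 b = 0"
    and ab: "a < b"
  shows "L1norm (fourier (\<lambda>v. complex_of_real (P v))) < \<infinity>"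
proof -
  have cP: "continuous_on {a..b} P"
    using d0 by (meson DERIV_isCont continuous_at_imp_continuous_on)
  have cP1: "continuous_on {a..b} P1"
    using d1 by (meson DERIV_isCont continuous_at_imp_continuous_on)
  have cP2: "continuous_on {a..b} P2"
    using c2 by (simp add: continuous_at_imp_continuous_on)
  have za: "P a = 0" "P b = 0" using z by auto
  have "\<exists>K. \<forall>y\<in>P ` {a..b}. norm y \<le> K"
    using compact_imp_bounded[OF compact_continuous_image[OF cP compact_Icc]]
    unfolding bounded_iff .
  then obtain K0 where K0: "\<And>v. v \<in> {a..b} \<Longrightarrow> norm (P v) \<le> K0" by blast
  have "\<exists>K. \<forall>y\<in>P2 ` {a..b}. norm y \<le> K"
    using compact_imp_bounded[OF compact_continuous_image[OF cP2 compact_Icc]]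
    unfolding bounded_iff .
  then obtain K2 where K2: "\<And>v. v \<in> {a..b} \<Longrightarrow> norm (P2 v) \<le> K2" by blast
  have K0': "\<And>v. a \<le> v \<Longrightarrow> v \<le> b \<Longrightarrow> \<bar>P v\<bar> \<le> K0" using K0 by auto
  have K2': "\<And>v. a \<le> v \<Longrightarrow> v \<le> b \<Longrightarrow> \<bar>P2 v\<bar> \<le> K2" using K2 by auto
  have K0p: "0 \<le> K0" using K0[of a] ab by simp
  have K2p: "0 \<le> K2" using K2[of a] ab by (smt (verit) norm_ge_zero atLeastAtMost_iff)
  let ?I = "\<lambda>Q x. integral {a..b} (\<lambda>v. complex_of_real (Q v) * Ef x v)"
  have FP: "fourier (\<lambda>v. complex_of_real (P v)) x = ?I P x" for x
    by (rule fourier_compact[OF _ cP]) (use z in auto)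
  have rel: "?I P2 x = - (complex_of_real (x * x) * ?I P x)" for x
  proof -
    have "?I P2 x = \<i> * complex_of_real x * ?I P1 x"
      by (rule ibp[OF d1 cP2 z1 less_imp_le[OF ab]])
    also have "?I P1 x = \<i> * complex_of_real x * ?I P x"
      by (rule ibp[OF d0 cP1 za less_imp_le[OF ab]])
    finally show ?thesis by (simp add: algebra_simps)
  qed
  have b0: "norm (?I P x) \<le> K0 * (b - a)" for x
    by (rule integral_bound[OF less_imp_le[OF ab]])
       (auto intro!: continuous_intros cP Ef_cont simp: norm_mult K0')
  have b2: "norm (?I P2 x) \<le> K2 * (b - a)" for x
    by (rule integral_bound[OF less_imp_le[OF ab]])
       (auto intro!: continuous_intros cP2 Ef_cont simp: norm_mult K2')
  define K where "K = 2 * (K0 + K2) * (b - a)"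
  have Kp: "0 \<le> K" unfolding K_def using K0p K2p ab by simp
  have bound: "norm (fourier (\<lambda>v. complex_of_real (P v)) x) \<le> K * Dm x" for x
  proof (cases "\<bar>x\<bar> \<le> 1")
    case True
    have "norm (fourier (\<lambda>v. complex_of_real (P v)) x) \<le> K0 * (b - a)" using FP b0 by simp
    also have "\<dots> \<le> K0 * (b - a) * (2 * Dm x)"
      using mult_left_mono[OF Dm_ge[OF sq_le1[OF True]], of "K0*(b-a)"] K0p ab by simp
    also have "\<dots> \<le> K * Dm x"
    proof -
      have "K * Dm x = K0 * (b - a) * (2 * Dm x) + K2 * (b - a) * (2 * Dm x)"
        unfolding K_def by (simp add: algebra_simps)
      moreover have "0 \<le> K2 * (b - a) * (2 * Dm x)" using K2p ab Dm_pos[of x]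
        by (intro mult_nonneg_nonneg) auto
      ultimately show ?thesis by linarith
    qed
    finally show ?thesis .
  next
    case False
    then have x1: "1 \<le> x^2" by (rule sq_ge1)
    then have x0: "x^2 > 0" by linarith
    have "norm (?I P2 x) = x^2 * norm (?I P x)" unfolding rel by (simp add: norm_mult power2_eq_square)
    then have "norm (?I P x) = norm (?I P2 x) / x^2" using x0 by (simp add: field_simps)
    also have "\<dots> \<le> K2 * (b - a) / x^2" using b2 x0 by (simp add: divide_right_mono)
    also have "\<dots> = K2 * (b - a) * (1 / x^2)" by simp
    also have "\<dots> \<le> K2 * (b - a) * (2 * Dm x)"
      using Dm_ge2[OF x1] K2p ab by (intro mult_left_mono) auto
    also have "\<dots> \<le> K * Dm x"
    proof -
      have "K * Dm x = K0 * (b - a) * (2 * Dm x) + K2 * (b - a) * (2 * Dm x)"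
        unfolding K_def by (simp add: algebra_simps)
      moreover have "0 \<le> K0 * (b - a) * (2 * Dm x)" using K0p ab Dm_pos[of x]
        by (intro mult_nonneg_nonneg) auto
      ultimately show ?thesis by linarith
    qed
    finally show ?thesis using FP by simp
  qed
  have "L1norm (fourier (\<lambda>v. complex_of_real (P v))) \<le> (\<integral>\<^sup>+ x. ennreal (K * Dm x) \<partial>lborel)"
    unfolding L1norm_def by (intro nn_integral_mono ennreal_leI bound)
  also have "\<dots> = ennreal (LINT x|lborel. K * Dm x)"
    by (rule nn_integral_eq_integral) (auto intro!: integrable_Dm simp: Kp Dm_pos less_imp_le)
  also have "\<dots> < \<infinity>" by simp
  finally show ?thesis .
qed

lemma fourier_meas[measurable]:
  assumes [measurable]: "\<phi> \<in> borel_measurable borel" shows "fourier \<phi> \<in> borel_measurable borel"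
  unfolding fourier_def by measurable

lemma fourier_term:
  fixes P :: "real \<Rightarrow> real"
  assumes s: "s > 0"
  shows "fourier (\<lambda>t. exp (- \<i> * complex_of_real (c0 * t)) * complex_of_real (P (s * t))) x
       = complex_of_real (1/s) * fourier (\<lambda>v. complex_of_real (P v)) ((x + c0) / s)"
proof -
  have c: "1/s \<noteq> 0" using s by simp
  have "fourier (\<lambda>t. exp (- \<i> * complex_of_real (c0 * t)) * complex_of_real (P (s * t))) x
      = \<bar>1/s\<bar> *\<^sub>R (LINT y|lborel. exp (- \<i> * complex_of_real (c0 * (0 + 1/s * y))) * complex_of_real (P (s * (0 + 1/s * y)))
            * exp (- \<i> * complex_of_real ((0 + 1/s * y) * x)))"
    unfolding fourier_def by (rule lborel_integral_real_affine[OF c])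
  also have "\<dots> = \<bar>1/s\<bar> *\<^sub>R (LINT y|lborel. complex_of_real (P y) * exp (- \<i> * complex_of_real (y * ((x + c0) / s))))"
  proof -
    have eq: "exp (- \<i> * complex_of_real (c0 * (0 + 1/s * y))) * complex_of_real (P (s * (0 + 1/s * y)))
            * exp (- \<i> * complex_of_real ((0 + 1/s * y) * x))
          = complex_of_real (P y) * exp (- \<i> * complex_of_real (y * ((x + c0) / s)))" for y
    proof -
      have "s * (0 + 1/s * y) = y" using s by simp
      moreover have "exp (- \<i> * complex_of_real (c0 * (0 + 1/s * y))) * exp (- \<i> * complex_of_real ((0 + 1/s * y) * x))
          = exp (- \<i> * complex_of_real (y * ((x + c0) / s)))"
        by (simp add: exp_add[symmetric] algebra_simps add_divide_distrib)
      ultimately show ?thesis by (simp add: mult_ac)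
    qed
    show ?thesis by (simp only: eq)
  qed
  also have "\<dots> = (1/s) *\<^sub>R (LINT y|lborel. complex_of_real (P y) * exp (- \<i> * complex_of_real (y * ((x + c0) / s))))"
    using s by simp
  also have "\<dots> = complex_of_real (1/s) * fourier (\<lambda>v. complex_of_real (P v)) ((x + c0) / s)"
    unfolding fourier_def by (simp add: scaleR_conv_of_real)
  finally show ?thesis .
qed

lemma L1_term:
  fixes P :: "real \<Rightarrow> real"
  assumes s: "s > 0" and [measurable]: "P \<in> borel_measurable borel"
  shows "L1norm (fourier (\<lambda>t. exp (- \<i> * complex_of_real (c0 * t)) * complex_of_real (P (s * t))))
       = L1norm (fourier (\<lambda>v. complex_of_real (P v)))"
proof -
  let ?FP = "fourier (\<lambda>v. complex_of_real (P v))"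
  have m[measurable]: "?FP \<in> borel_measurable borel" by measurable
  have "L1norm (fourier (\<lambda>t. exp (- \<i> * complex_of_real (c0 * t)) * complex_of_real (P (s * t))))
      = (\<integral>\<^sup>+ x. ennreal (1/s * norm (?FP ((x + c0) / s))) \<partial>lborel)"
    unfolding L1norm_def fourier_term[OF s]
    by (intro nn_integral_cong) (subst norm_mult, use s in \<open>simp add: norm_divide\<close>)
  also have "\<dots> = \<bar>s\<bar> * (\<integral>\<^sup>+ y. ennreal (1/s * norm (?FP ((- c0 + s * y + c0) / s))) \<partial>lborel)"
    by (rule nn_integral_real_affine) (use s in auto)
  also have "\<dots> = s * (\<integral>\<^sup>+ y. ennreal (1/s) * ennreal (norm (?FP y)) \<partial>lborel)"
  proof -
    have pt: "ennreal (1/s * norm (?FP ((- c0 + s * y + c0) / s))) = ennreal (1/s) * ennreal (norm (?FP y))" for y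
    proof -
      have "(- c0 + s * y + c0) / s = y" using s by simp
      then show ?thesis using s by (simp only:) (rule ennreal_mult; simp)
    qed
    show ?thesis using s by (simp only: pt abs_of_pos)
  qed
  also have "\<dots> = s * (ennreal (1/s) * L1norm ?FP)"
    unfolding L1norm_def by (subst nn_integral_cmult) auto
  also have "\<dots> = L1norm ?FP"
    using s by (simp add: ennreal_mult[symmetric] mult.assoc[symmetric] del: ennreal_mult')
  finally show ?thesis .
qed

context psiloc begin

definition Pd :: "real \<Rightarrow> real \<Rightarrow> real" where "Pd c v = \<psi> (c * v) * \<psi> v"

lemma cont_scaled: "(\<And>y. isCont f y) \<Longrightarrow> isCont (\<lambda>v. f (c * v)) (x::real)"
  for f :: "real \<Rightarrow> real"
  by (rule isCont_o2[where f="\<lambda>v. c * v"]) (auto intro!: continuous_intros)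

lemma d0_scaled: "((\<lambda>v. \<psi> (c * v)) has_real_derivative (deriv \<psi> (c * v) * c)) (at v)"
  by (rule DERIV_chain2[OF d0]) (auto intro!: derivative_eq_intros)

lemma d1_scaled: "((\<lambda>v. deriv \<psi> (c * v)) has_real_derivative (deriv (deriv \<psi>) (c * v) * c)) (at v)"
  by (rule DERIV_chain2[OF d1]) (auto intro!: derivative_eq_intros)

definition P1 :: "real \<Rightarrow> real \<Rightarrow> real" where
  "P1 c v = deriv \<psi> (c * v) * c * \<psi> v + deriv \<psi> v * \<psi> (c * v)"

definition P2 :: "real \<Rightarrow> real \<Rightarrow> real" where
  "P2 c v = (deriv (deriv \<psi>) (c * v) * c * c * \<psi> v + deriv \<psi> v * (deriv \<psi> (c * v) * c))
          + (deriv (deriv \<psi>) v * \<psi> (c * v) + deriv \<psi> (c * v) * c * deriv \<psi> v)"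

lemma Pd_d0: "(Pd c has_real_derivative P1 c v) (at v)"
  unfolding Pd_def P1_def using DERIV_mult[OF d0_scaled d0, of c v] by (simp add: mult.commute)

lemma Pd_d1: "(P1 c has_real_derivative P2 c v) (at v)"
proof -
  have a: "((\<lambda>v. deriv \<psi> (c * v) * c) has_real_derivative deriv (deriv \<psi>) (c * v) * c * c) (at v)"
    using DERIV_cmult_right[OF d1_scaled, of c] by simp
  have "((\<lambda>v. deriv \<psi> (c * v) * c * \<psi> v + deriv \<psi> v * \<psi> (c * v)) has_real_derivative
      (deriv (deriv \<psi>) (c * v) * c * c * \<psi> v + deriv \<psi> v * (deriv \<psi> (c * v) * c))
      + (deriv (deriv \<psi>) v * \<psi> (c * v) + deriv \<psi> (c * v) * c * deriv \<psi> v)) (at v)"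
    by (rule DERIV_add[OF DERIV_mult[OF a d0] DERIV_mult[OF d1 d0_scaled]])
  then show ?thesis unfolding P1_def P2_def .
qed

lemma d1c: "isCont (deriv \<psi>) y" using d1 by (rule DERIV_isCont)

lemma Pd_c2: "isCont (P2 c) v"
  unfolding P2_def
  by (intro continuous_intros cont_scaled d2_cont d1c cont)

lemma Pd_z: "v \<notin> {0<..<3} \<Longrightarrow> Pd c v = 0"
  unfolding Pd_def using nonpos[of v] out[of v] by auto

lemma P1_0: "P1 c 0 = 0" unfolding P1_def using nonpos[of 0] d0_out[of 0] by simp
lemma P1_3: "P1 c 3 = 0" unfolding P1_def using out[of 3] d0_out[of 3] by simp

lemma Pd_L1: "L1norm (fourier (\<lambda>v. complex_of_real (Pd c v))) < \<infinity>"
  using fourier_C2_L1[OF Pd_d0 Pd_d1 Pd_c2 Pd_z P1_0 P1_3] by simp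

lemma compact_integrable:
  fixes f :: "real \<Rightarrow> complex"
  assumes c: "continuous_on {a..b} f" and z: "\<And>t. t \<notin> {a..b} \<Longrightarrow> f t = 0"
  shows "integrable lborel f"
proof -
  have "integrable lborel (\<lambda>t. indicator {a..b} t *\<^sub>R f t)"
    using borel_integrable_atLeastAtMost'[OF c] unfolding set_integrable_def .
  moreover have "(\<lambda>t. indicator {a..b} t *\<^sub>R f t) = f"
    using z by (auto simp: fun_eq_iff split: split_indicator)
  ultimately show ?thesis by simp
qed

lemma Pd_cont: "isCont (Pd c) v" using Pd_d0 by (rule DERIV_isCont)

lemma term_integrable:
  fixes e :: "real \<Rightarrow> complex"
  assumes s: "s > 0" and that: "continuous_on UNIV e"
  shows "integrable lborel (\<lambda>t. exp (- \<i> * complex_of_real (c0 * t)) * complex_of_real (Pd c (s * t)) * e t)"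
proof (rule compact_integrable[where a=0 and b="3/s"])
  show "continuous_on {0..3/s} (\<lambda>t. exp (- \<i> * complex_of_real (c0 * t)) * complex_of_real (Pd c (s * t)) * e t)"
    by (intro continuous_intros continuous_on_subset[OF that] continuous_at_imp_continuous_on ballI
        cont_scaled Pd_cont) auto
  fix t assume "t \<notin> {0..3/s}"
  have "s * t \<notin> {0<..<3}"
  proof
    assume h: "s * t \<in> {0<..<3}"
    then have "0 < t" using s by (simp add: zero_less_mult_iff)
    moreover have "t < 3/s" using h s by (simp add: less_divide_eq mult.commute)
    ultimately show False using \<open>t \<notin> {0..3/s}\<close> by auto
  qed
  then show "exp (- \<i> * complex_of_real (c0 * t)) * complex_of_real (Pd c (s * t)) * e t = 0"
    using Pd_z by simp
qed

lemma pk_shift: "psi_k \<psi> (k + d) t = \<psi> (2 powr (- real_of_int d) * (2 powr (- real_of_int k) * t))"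
proof -
  have "2 powr (- real_of_int (k + d)) = 2 powr (- real_of_int d) * 2 powr (- real_of_int k)"
    by (simp add: powr_add[symmetric] algebra_simps)
  then show ?thesis unfolding psi_k_def by (simp add: mult.assoc)
qed

lemma mpk_decomp:
  "m_psi_k (mm a) \<psi> k t = (\<Sum>d\<in>{-2..2::int}. exp (- \<i> * complex_of_real (a (k + d) * t)) *
       complex_of_real (Pd (2 powr (- real_of_int d)) (2 powr (- real_of_int k) * t)))"
proof -
  let ?s = "2 powr (- real_of_int k) * t"
  have pkk: "psi_k \<psi> k t = \<psi> ?s" unfolding psi_k_def ..
  show ?thesis
  proof (cases "\<psi> ?s = 0")
    case True
    then have "m_psi_k (mm a) \<psi> k t = 0" unfolding m_psi_k_def pkk by simp
    moreover have "Pd c ?s = 0" for c unfolding Pd_def using True by simp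
    ultimately show ?thesis by simp
  next
    case False
    then have nz: "psi_k \<psi> k t \<noteq> 0" using pkk by simp
    note hk = pk_log[OF nz]
    have "mm a t = (\<Sum>j\<in>{k-2..k+2}. fj a j t)"
    proof (rule mm_sum)
      fix j assume "psi_k \<psi> j t \<noteq> 0"
      note hj = pk_log[OF this]
      have "real_of_int j < real_of_int k + 2" "real_of_int k - 2 < real_of_int j" using hj hk by linarith+
      then show "j \<in> {k-2..k+2}" by simp
    qed simp
    then have "m_psi_k (mm a) \<psi> k t = (\<Sum>j\<in>{k-2..k+2}. fj a j t * complex_of_real (\<psi> ?s))"
      unfolding m_psi_k_def pkk using hk by (simp add: sum_distrib_right)
    also have "\<dots> = (\<Sum>d\<in>{-2..2::int}. fj a (k + d) t * complex_of_real (\<psi> ?s))"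
      by (rule sum.reindex_bij_witness[of _ "\<lambda>j. k + j" "\<lambda>j. j - k"]) auto
    also have "\<dots> = (\<Sum>d\<in>{-2..2::int}. exp (- \<i> * complex_of_real (a (k + d) * t)) *
       complex_of_real (Pd (2 powr (- real_of_int d)) ?s))"
      by (intro sum.cong refl) (simp add: fj_def Pd_def pk_shift)
    finally show ?thesis .
  qed
qed

lemma sup_bound: "(SUP k::int. L1norm (fourier (m_psi_k (mm a) \<psi> k))) < top"
proof -
  define M where "M = (\<Sum>d\<in>{-2..2::int}. L1norm (fourier (\<lambda>v. complex_of_real (Pd (2 powr (- real_of_int d)) v))))"
  have Mfin: "M < top" unfolding M_def using Pd_L1 by simp
  have "L1norm (fourier (m_psi_k (mm a) \<psi> k)) \<le> M" for k
  proof -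
    let ?s = "2 powr (- real_of_int k)"
    have sp: "?s > 0" by simp
    let ?g = "\<lambda>d t. exp (- \<i> * complex_of_real (a (k + d) * t)) *
       complex_of_real (Pd (2 powr (- real_of_int d)) (?s * t))"
    have ig: "integrable lborel (\<lambda>t. ?g d t * exp (- \<i> * complex_of_real (t * x)))" for d x
      by (rule term_integrable[OF sp]) (intro continuous_intros)
    have fsum: "fourier (m_psi_k (mm a) \<psi> k) x = (\<Sum>d\<in>{-2..2::int}. fourier (?g d) x)" for x
    proof -
      have "fourier (m_psi_k (mm a) \<psi> k) x = (LINT t|lborel. (\<Sum>d\<in>{-2..2::int}. ?g d t * exp (- \<i> * complex_of_real (t * x))))"
        unfolding fourier_def mpk_decomp by (simp add: sum_distrib_right)
      also have "\<dots> = (\<Sum>d\<in>{-2..2::int}. fourier (?g d) x)"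
        unfolding fourier_def by (rule Bochner_Integration.integral_sum) (rule ig)
      finally show ?thesis .
    qed
    have meas: "(\<lambda>x. ennreal (norm (fourier (?g d) x))) \<in> borel_measurable lborel" for d
    proof -
      have "?g d \<in> borel_measurable borel"
        by (intro borel_measurable_continuous_onI continuous_intros continuous_at_imp_continuous_on ballI
          cont_scaled Pd_cont)
      then show ?thesis by measurable
    qed
    have "L1norm (fourier (m_psi_k (mm a) \<psi> k)) \<le> (\<integral>\<^sup>+ x. (\<Sum>d\<in>{-2..2::int}. ennreal (norm (fourier (?g d) x))) \<partial>lborel)"
      unfolding L1norm_def fsum
      by (intro nn_integral_mono, subst sum_ennreal, simp, rule ennreal_leI, rule norm_sum)
    also have "\<dots> = (\<Sum>d\<in>{-2..2::int}. L1norm (fourier (?g d)))"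
      unfolding L1norm_def by (rule nn_integral_sum) (rule meas)
    also have "\<dots> = M"
      unfolding M_def
      by (intro sum.cong refl L1_term[OF sp]) (simp add: borel_measurable_continuous_onI continuous_at_imp_continuous_on Pd_cont)
    finally show ?thesis .
  qed
  then have "(SUP k::int. L1norm (fourier (m_psi_k (mm a) \<psi> k))) \<le> M" by (rule SUP_least)
  then show ?thesis using Mfin by (rule le_less_trans)
qed

end

definition ei :: "real \<Rightarrow> complex" where "ei r = exp (\<i> * complex_of_real r)"

lemma norm_ei[simp]: "norm (ei r) = 1" unfolding ei_def by simp

lemma ei_cont: "continuous_on S (\<lambda>x. ei (f x))" if "continuous_on S f"
  unfolding ei_def by (intro continuous_intros that)

lemma ei_meas[measurable]: "ei \<in> borel_measurable borel"
  unfolding ei_def by measurable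

definition Sm :: "real \<Rightarrow> real \<Rightarrow> real \<Rightarrow> complex" where
  "Sm c w x = complex_of_real (Sf (x - c)) * ei (w * (x - c))"

lemma Sm_meas[measurable]: "Sm c w \<in> borel_measurable borel"
  unfolding Sm_def by measurable

lemma norm_Sm: "norm (Sm c w x) = Sf (x - c)"
  unfolding Sm_def by (simp add: norm_mult Sf_nonneg)

lemma integrable_Sf_shift: "integrable lborel (\<lambda>x. Sf (x - c))"
proof -
  have "integrable lborel (\<lambda>x. Sf (- c + 1 * x))"
    using lborel_integrable_real_affine_iff[of 1 Sf "-c"] integrable_Sf by simp
  then show ?thesis by simp
qed

lemma integrable_Sm_mult:
  assumes [measurable]: "e \<in> borel_measurable borel" and e: "\<And>x. norm (e x) \<le> 1"
  shows "integrable lborel (\<lambda>x. Sm c w x * e x)"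
proof (rule Bochner_Integration.integrable_bound[OF integrable_Sf_shift[of c]])
  show "(\<lambda>x. Sm c w x * e x) \<in> borel_measurable lborel" by measurable
  show "AE x in lborel. norm (Sm c w x * e x) \<le> norm (Sf (x - c))"
    by (intro AE_I2) (simp add: norm_mult norm_Sm mult_left_le Sf_nonneg e)
qed

lemma integrable_Sm: "integrable lborel (Sm c w)"
  using integrable_Sm_mult[of "\<lambda>_. 1" c w] by simp

lemma fourier_Sm: "fourier (Sm c w) u = exp (- \<i> * complex_of_real (c * u)) * FS (u - w)"
proof -
  have "fourier (Sm c w) u = \<bar>1\<bar> *\<^sub>R (LINT y|lborel. Sm c w (c + 1 * y) * exp (- \<i> * complex_of_real ((c + 1 * y) * u)))"
    unfolding fourier_def by (rule lborel_integral_real_affine) simp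
  also have "\<dots> = (LINT y|lborel. exp (- \<i> * complex_of_real (c * u)) * (complex_of_real (Sf y) * exp (- \<i> * complex_of_real (y * (u - w)))))"
  proof -
    have "Sm c w (c + 1 * y) * exp (- \<i> * complex_of_real ((c + 1 * y) * u)) =
          exp (- \<i> * complex_of_real (c * u)) * (complex_of_real (Sf y) * exp (- \<i> * complex_of_real (y * (u - w))))" for y
    proof -
      have "ei (w * y) * exp (- \<i> * complex_of_real ((c + y) * u)) =
            exp (- \<i> * complex_of_real (c * u)) * exp (- \<i> * complex_of_real (y * (u - w)))"
        unfolding ei_def by (simp add: exp_add[symmetric] algebra_simps)
      then show ?thesis unfolding Sm_def by (simp add: mult_ac)
    qed
    then show ?thesis by simp
  qed
  also have "\<dots> = exp (- \<i> * complex_of_real (c * u)) * FS (u - w)"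
    unfolding FS_def fourier_def by simp
  finally show ?thesis .
qed

lemma Sm0: "Sm 0 w x = complex_of_real (Sf x) * ei (w * x)"
  unfolding Sm_def by simp

definition om :: "nat \<Rightarrow> real" where "om k = 7/8 * 2^k"

definition hh :: "nat set \<Rightarrow> real \<Rightarrow> complex" where
  "hh K x = (\<Sum>k\<in>K. Sm 0 (om k) x)"

definition gg :: "(int \<Rightarrow> real) \<Rightarrow> nat set \<Rightarrow> real \<Rightarrow> complex" where
  "gg a K x = (\<Sum>k\<in>K. Sm (a (int k)) (om k) x)"

lemma hh_gg: "hh K = gg (\<lambda>_. 0) K" unfolding hh_def gg_def by simp

lemma gg_meas[measurable]: "gg a K \<in> borel_measurable borel"
  unfolding gg_def by measurable

lemma integrable_gg: "integrable lborel (gg a K)"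
  unfolding gg_def by (intro Bochner_Integration.integrable_sum integrable_Sm)

lemma fourier_gg: "fourier (gg a K) u = (\<Sum>k\<in>K. exp (- \<i> * complex_of_real (a (int k) * u)) * FS (u - om k))"
proof -
  have "fourier (gg a K) u = (LINT x|lborel. (\<Sum>k\<in>K. Sm (a (int k)) (om k) x * exp (- \<i> * complex_of_real (x * u))))"
    unfolding fourier_def gg_def by (simp add: sum_distrib_right)
  also have "\<dots> = (\<Sum>k\<in>K. fourier (Sm (a (int k)) (om k)) u)"
    unfolding fourier_def by (intro Bochner_Integration.integral_sum integrable_Sm_mult) auto
  finally show ?thesis by (simp add: fourier_Sm)
qed

lemma fourier_hh: "fourier (hh K) u = (\<Sum>k\<in>K. FS (u - om k))"
  unfolding hh_gg fourier_gg by simp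

lemma norm_gg_le: "norm (gg a K x) \<le> (\<Sum>k\<in>K. Sf (x - a (int k)))"
  unfolding gg_def by (rule order_trans[OF norm_sum]) (simp add: norm_Sm)

lemma L2_gg: "L2 (gg a K)"
  unfolding L2_def
proof
  show "gg a K \<in> borel_measurable lborel" by simp
  let ?N = "real (card K)"
  show "integrable lborel (\<lambda>t. (norm (gg a K t))\<^sup>2)"
  proof (rule Bochner_Integration.integrable_bound)
    show "integrable lborel (\<lambda>x. ?N * (\<Sum>k\<in>K. Sf (x - a (int k))))"
      by (intro integrable_mult_right Bochner_Integration.integrable_sum integrable_Sf_shift)
    show "(\<lambda>t. (norm (gg a K t))\<^sup>2) \<in> borel_measurable lborel" by measurable
    show "AE x in lborel. norm ((norm (gg a K x))\<^sup>2) \<le> norm (?N * (\<Sum>k\<in>K. Sf (x - a (int k))))"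
    proof (intro AE_I2)
      fix x
      have s0: "0 \<le> (\<Sum>k\<in>K. Sf (x - a (int k)))" by (intro sum_nonneg Sf_nonneg)
      have s1: "(\<Sum>k\<in>K. Sf (x - a (int k))) \<le> ?N"
        using sum_mono[of K "\<lambda>k. Sf (x - a (int k))" "\<lambda>_. 1"] Sf_le1 by simp
      have n: "norm (gg a K x) \<le> (\<Sum>k\<in>K. Sf (x - a (int k)))" by (rule norm_gg_le)
      have "(norm (gg a K x))\<^sup>2 \<le> (\<Sum>k\<in>K. Sf (x - a (int k)))\<^sup>2"
        using n by (intro power_mono) auto
      also have "\<dots> \<le> ?N * (\<Sum>k\<in>K. Sf (x - a (int k)))"
        unfolding power2_eq_square using s0 s1 by (intro mult_right_mono) auto
      finally show "norm ((norm (gg a K x))\<^sup>2) \<le> norm (?N * (\<Sum>k\<in>K. Sf (x - a (int k))))"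
        using s0 by simp
    qed
  qed
qed

lemma om_ge: "k \<ge> 4 \<Longrightarrow> om k \<ge> 14"
proof -
  assume "k \<ge> 4"
  then have "(2::real)^4 \<le> 2^k" by (intro power_increasing) auto
  then show ?thesis unfolding om_def by simp
qed

lemma H1_hh: assumes "\<forall>k\<in>K. k \<ge> 4" shows "H1_H2 (hh K)"
  unfolding H1_H2_def L1_def
proof (intro conjI allI impI)
  show "integrable lborel (hh K)" unfolding hh_gg by (rule integrable_gg)
  show "L2 (hh K)" unfolding hh_gg by (rule L2_gg)
  fix u :: real assume "u \<le> 0"
  have "FS (u - om k) = 0" if "k \<in> K" for k
  proof (rule FS_zero)
    have "om k \<ge> 14" using om_ge assms that by auto
    then show "2 \<le> \<bar>u - om k\<bar>" using \<open>u \<le> 0\<close> by simp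
  qed
  then show "fourier (hh K) u = 0" unfolding fourier_hh by simp
qed

context psiloc begin

lemma term_eq:
  assumes k: "k \<ge> 4"
  shows "exp (- \<i> * complex_of_real (a (int k) * u)) * FS (u - om k)
       = indicator {0<..} u * mm a u * FS (u - om k)"
proof (cases "\<bar>u - om k\<bar> \<ge> 2")
  case True then show ?thesis by (simp add: FS_zero)
next
  case False
  have p: "(2::real)^4 \<le> 2^k" using k by (intro power_increasing) auto
  then have p': "16 \<le> (2::real)^k" by simp
  have pk: "2 powr (real_of_int (int k)) = 2^k" by (simp add: powr_realpow)
  have "\<bar>u - om k\<bar> < 2" using False by simp
  then have b: "om k - 2 < u" "u < om k + 2" by (simp_all only: abs_less_iff) linarith+
  have u1: "3/4 * 2 powr (real_of_int (int k)) \<le> u" unfolding pk using b p' unfolding om_def by linarith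
  have u2: "u \<le> 2 powr (real_of_int (int k))" unfolding pk using b p' unfolding om_def by linarith
  have "u > 0" using b p' unfolding om_def by linarith
  then show ?thesis using mm_band[OF u1 u2] by simp
qed

lemma Tm_gg:
  assumes K: "\<forall>k\<in>K. k \<ge> 4"
  shows "is_Tm (mm a) (hh K) (gg a K)"
  unfolding is_Tm_def
proof (intro conjI allI impI)
  show "L2 (gg a K)" by (rule L2_gg)
  fix \<phi> :: "real \<Rightarrow> complex" assume "L1 \<phi> \<and> L2 \<phi>"
  then have p: "integrable lborel \<phi>" unfolding L1_def by simp
  have "(LINT x|lborel. gg a K x * fourier \<phi> x) = (LINT u|lborel. fourier (gg a K) u * \<phi> u)"
    by (rule fourier_swap[OF integrable_gg p])
  also have "\<dots> = (LINT u|lborel. indicator {0<..} u * mm a u * fourier (hh K) u * \<phi> u)"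
  proof (intro Bochner_Integration.integral_cong refl)
    fix u
    have "fourier (gg a K) u = indicator {0<..} u * mm a u * fourier (hh K) u"
      unfolding fourier_gg fourier_hh sum_distrib_left
      by (intro sum.cong refl term_eq) (use K in auto)
    then show "fourier (gg a K) u * \<phi> u = indicator {0<..} u * mm a u * fourier (hh K) u * \<phi> u"
      by simp
  qed
  finally show "(LINT x|lborel. gg a K x * fourier \<phi> x) = (LINT u|lborel. indicator {0<..} u * mm a u * fourier (hh K) u * \<phi> u)" .
qed

end

definition Aint :: real where "Aint = (LINT x|lborel. Sf x)"

definition TL :: "real \<Rightarrow> real" where
  "TL L = (LINT y|lborel. indicator {y. L \<le> \<bar>y\<bar>} y * Sf y)"

lemma Aint_pos: "0 < Aint"
proof -
  have ge: "0 \<le> Aint" unfolding Aint_def by (intro integral_nonneg_AE) (simp add: Sf_nonneg)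
  have "Aint \<noteq> 0"
  proof
    assume "Aint = 0"
    then have "AE x in lborel. Sf x = 0"
      unfolding Aint_def using integral_nonneg_eq_0_iff_AE[OF integrable_Sf] by (simp add: Sf_nonneg)
    moreover have "Sf x \<noteq> 0" if "x \<in> {0<..<1}" for x
    proof -
      have "0 < sin x" using that by (intro sin_gt_zero) (use pi_gt3 in auto)
      then show ?thesis using that unfolding Sf_def by simp
    qed
    ultimately have "AE x in lborel. x \<notin> {0<..<1::real}" by (auto elim!: AE_mp)
    then have "{x \<in> space lborel. \<not> (x \<notin> {0<..<1::real})} \<in> null_sets lborel"
      by (subst AE_iff_null[symmetric]) auto
    moreover have "{x \<in> space lborel. \<not> (x \<notin> {0<..<1::real})} = {0<..<1}" by auto
    ultimately have "emeasure lborel {0<..<1::real} = 0" by (simp add: null_sets_def)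
    then show False by simp
  qed
  with ge show ?thesis by simp
qed

lemma TL_lim: "(\<lambda>n. TL (real n)) \<longlonglongrightarrow> 0"
proof -
  let ?s = "\<lambda>(n::nat) (y::real). indicator {y. real n \<le> \<bar>y\<bar>} y * Sf y"
  have m1: "(\<lambda>_. 0::real) \<in> borel_measurable lborel" by simp
  have m2: "\<And>n. ?s n \<in> borel_measurable lborel" by measurable
  have lim: "AE x in lborel. (\<lambda>n. ?s n x) \<longlonglongrightarrow> 0"
  proof (intro AE_I2)
    fix x :: real
    obtain n0 :: nat where "\<bar>x\<bar> < real n0" using reals_Archimedean2 by blast
    then have "eventually (\<lambda>n. ?s n x = 0) sequentially"
      unfolding eventually_sequentially
      by (intro exI[of _ n0]) (auto simp: indicator_def)
    then show "(\<lambda>n. ?s n x) \<longlonglongrightarrow> 0"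
      by (rule tendsto_eventually)
  qed
  have bnd: "\<And>n. AE x in lborel. norm (?s n x) \<le> Sf x"
    by (intro AE_I2) (auto simp: indicator_def Sf_nonneg)
  have "(\<lambda>n. integral\<^sup>L lborel (?s n)) \<longlonglongrightarrow> integral\<^sup>L lborel (\<lambda>_. 0::real)"
    using Bochner_Integration.integral_dominated_convergence[OF m1 m2 integrable_Sf lim bnd] by simp
  then show ?thesis unfolding TL_def by simp
qed

lemma exists_L: "\<exists>L. 1 \<le> L \<and> TL L < Aint / 4"
proof -
  have "eventually (\<lambda>n. TL (real n) < Aint / 4) sequentially"
    using TL_lim Aint_pos by (intro order_tendstoD) auto
  moreover have "eventually (\<lambda>n. 1 \<le> n) sequentially" by (rule eventually_ge_at_top)
  ultimately obtain n where "TL (real n) < Aint / 4" "1 \<le> n"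
    using eventually_sequentially by (metis (mono_tags, lifting) eventually_conj_iff eventually_sequentially le_refl)
  then show ?thesis by (intro exI[of _ "real n"]) auto
qed

definition se :: "nat set \<Rightarrow> real \<Rightarrow> complex" where
  "se K x = (\<Sum>k\<in>K. ei (om k * x))"

lemma hh_se: "hh K x = complex_of_real (Sf x) * se K x"
  unfolding hh_def se_def Sm_def by (simp add: sum_distrib_left)

lemma om_sep:
  assumes "j \<ge> 4" "k \<ge> 4" "j \<noteq> k"
  shows "2 \<le> \<bar>om k - om j\<bar>"
proof -
  have main: "2 \<le> om q - om p" if "p \<ge> 4" "p < q" for p q
  proof -
    have "(2::real)^(Suc p) \<le> 2^q" using that by (intro power_increasing) auto
    then have "2 * 2^p \<le> (2::real)^q" by simp
    moreover have "om p \<ge> 14" using om_ge that by simp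
    ultimately show ?thesis unfolding om_def by simp
  qed
  show ?thesis
  proof (cases "j < k")
    case True then show ?thesis using main[of j k] assms by simp
  next
    case False then have "k < j" using assms by simp
    then show ?thesis using main[of k j] assms by simp
  qed
qed

lemma integrable_Sf_exp: "integrable lborel (\<lambda>x. complex_of_real (Sf x) * exp (- \<i> * complex_of_real (x * l)))"
proof (rule Bochner_Integration.integrable_bound[OF integrable_Sf])
  show "(\<lambda>x. complex_of_real (Sf x) * exp (- \<i> * complex_of_real (x * l))) \<in> borel_measurable lborel"
    by measurable
  show "AE x in lborel. norm (complex_of_real (Sf x) * exp (- \<i> * complex_of_real (x * l))) \<le> norm (Sf x)"
    by (intro AE_I2) (simp add: norm_mult)
qed

lemma ei_cnj: "ei r * cnj (ei s) = exp (- \<i> * complex_of_real (x * l))" if "x * l = s - r"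
proof -
  have c: "cnj (ei s) = exp (- \<i> * complex_of_real s)" unfolding ei_def by (simp add: exp_cnj)
  have e: "exp (\<i> * complex_of_real r) * exp (- \<i> * complex_of_real s) = exp (\<i> * complex_of_real r + - \<i> * complex_of_real s)"
    by (rule exp_add[symmetric])
  have s: "s = r + x * l" using that by simp
  have a: "\<i> * complex_of_real r + - \<i> * complex_of_real s = - \<i> * complex_of_real (x * l)"
    unfolding s by (simp add: algebra_simps)
  show ?thesis unfolding ei_def[of r] c e a ..
qed

lemma Sf_se_int:
  assumes K: "finite K" "\<forall>k\<in>K. k \<ge> 4"
  shows "(LINT x|lborel. Sf x * (norm (se K x))\<^sup>2) = real (card K) * Aint"
proof -
  have eq: "complex_of_real (Sf x * (norm (se K x))\<^sup>2) =
      (\<Sum>j\<in>K. \<Sum>k\<in>K. complex_of_real (Sf x) * exp (- \<i> * complex_of_real (x * (om k - om j))))" for x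
  proof -
    have "complex_of_real (Sf x * (norm (se K x))\<^sup>2) = complex_of_real (Sf x) * (se K x * cnj (se K x))"
      by (simp only: of_real_mult complex_norm_square)
    also have "se K x * cnj (se K x) = (\<Sum>j\<in>K. \<Sum>k\<in>K. ei (om j * x) * cnj (ei (om k * x)))"
      unfolding se_def cnj_sum sum_product ..
    also have "\<dots> = (\<Sum>j\<in>K. \<Sum>k\<in>K. exp (- \<i> * complex_of_real (x * (om k - om j))))"
      by (intro sum.cong refl ei_cnj) (simp add: algebra_simps)
    finally show ?thesis by (simp add: sum_distrib_left)
  qed
  have "complex_of_real (LINT x|lborel. Sf x * (norm (se K x))\<^sup>2)
      = (LINT x|lborel. (\<Sum>j\<in>K. \<Sum>k\<in>K. complex_of_real (Sf x) * exp (- \<i> * complex_of_real (x * (om k - om j)))))"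
    unfolding integral_complex_of_real[symmetric] eq ..
  also have "\<dots> = (\<Sum>j\<in>K. (LINT x|lborel. (\<Sum>k\<in>K. complex_of_real (Sf x) * exp (- \<i> * complex_of_real (x * (om k - om j))))))"
    by (rule Bochner_Integration.integral_sum) (intro Bochner_Integration.integrable_sum integrable_Sf_exp)
  also have "\<dots> = (\<Sum>j\<in>K. \<Sum>k\<in>K. (LINT x|lborel. complex_of_real (Sf x) * exp (- \<i> * complex_of_real (x * (om k - om j)))))"
    by (intro sum.cong refl Bochner_Integration.integral_sum integrable_Sf_exp)
  also have "\<dots> = (\<Sum>j\<in>K. \<Sum>k\<in>K. FS (om k - om j))"
    unfolding FS_def fourier_def ..
  also have "\<dots> = (\<Sum>j\<in>K. complex_of_real Aint)"
  proof (intro sum.cong refl)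
    fix j assume j: "j \<in> K"
    have "(\<Sum>k\<in>K. FS (om k - om j)) = (\<Sum>k\<in>K. if k = j then complex_of_real Aint else 0)"
    proof (intro sum.cong refl)
      fix k assume k: "k \<in> K"
      show "FS (om k - om j) = (if k = j then complex_of_real Aint else 0)"
      proof (cases "k = j")
        case True then show ?thesis by (simp add: FS_0 Aint_def)
      next
        case False
        then have "2 \<le> \<bar>om k - om j\<bar>" using om_sep K j k by auto
        then show ?thesis using False by (simp add: FS_zero)
      qed
    qed
    also have "\<dots> = complex_of_real Aint" using j K by simp
    finally show "(\<Sum>k\<in>K. FS (om k - om j)) = complex_of_real Aint" .
  qed
  also have "\<dots> = complex_of_real (real (card K) * Aint)" by simp
  finally show ?thesis by (simp only: of_real_eq_iff)
qed

lemma se_meas[measurable]: "se K \<in> borel_measurable borel"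
  unfolding se_def by measurable

lemma norm_se_le: "norm (se K x) \<le> real (card K)"
  unfolding se_def by (rule order_trans[OF norm_sum]) simp

lemma L1norm_eq: "integrable lborel f \<Longrightarrow> L1norm f = ennreal (LINT x|lborel. norm (f x))"
  unfolding L1norm_def by (rule nn_integral_eq_integral) (auto intro: integrable_norm)

lemma hh_upper:
  assumes K: "finite K" "\<forall>k\<in>K. k \<ge> 4" and n0: "n0 > 0" and c: "real (card K) = n0^2"
  shows "L1norm (hh K) \<le> ennreal (Aint * n0)"
proof -
  let ?ns = "\<lambda>x. norm (se K x)"
  have int2: "integrable lborel (\<lambda>x. Sf x * (?ns x)\<^sup>2)"
  proof (rule Bochner_Integration.integrable_bound[OF integrable_mult_right[OF integrable_Sf, of "(real (card K))^2"]])
    show "(\<lambda>x. Sf x * (?ns x)\<^sup>2) \<in> borel_measurable lborel" by measurable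
    show "AE x in lborel. norm (Sf x * (?ns x)\<^sup>2) \<le> norm ((real (card K))\<^sup>2 * Sf x)"
    proof (intro AE_I2)
      fix x
      have "(?ns x)\<^sup>2 \<le> (real (card K))\<^sup>2" using norm_se_le[of K x] by (intro power_mono) auto
      then show "norm (Sf x * (?ns x)\<^sup>2) \<le> norm ((real (card K))\<^sup>2 * Sf x)"
        using Sf_nonneg[of x] by (simp add: mult_left_mono mult.commute)
    qed
  qed
  have pt: "norm (hh K x) \<le> (Sf x * (?ns x)\<^sup>2 / n0 + n0 * Sf x) / 2" for x
  proof -
    have "0 \<le> (?ns x - n0)\<^sup>2" by simp
    then have "2 * (?ns x * n0) \<le> (?ns x)\<^sup>2 + n0\<^sup>2" by (simp add: power2_eq_square algebra_simps)
    then have "?ns x \<le> ((?ns x)\<^sup>2 / n0 + n0) / 2" using n0 by (simp add: field_simps power2_eq_square)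
    then have "Sf x * ?ns x \<le> Sf x * (((?ns x)\<^sup>2 / n0 + n0) / 2)" using Sf_nonneg[of x] by (rule mult_left_mono)
    moreover have "norm (hh K x) = Sf x * ?ns x" unfolding hh_se by (simp add: norm_mult Sf_nonneg)
    ultimately show ?thesis by (simp add: algebra_simps add_divide_distrib)
  qed
  have ihh: "integrable lborel (hh K)" unfolding hh_gg by (rule integrable_gg)
  have i3: "integrable lborel (\<lambda>x. (Sf x * (?ns x)\<^sup>2 / n0 + n0 * Sf x) / 2)"
    by (intro integrable_divide_zero Bochner_Integration.integrable_add integrable_mult_right integrable_Sf int2)
  have "(LINT x|lborel. norm (hh K x)) \<le> (LINT x|lborel. (Sf x * (?ns x)\<^sup>2 / n0 + n0 * Sf x) / 2)"
    by (rule integral_mono[OF integrable_norm[OF ihh] i3 pt])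
  also have "\<dots> = ((LINT x|lborel. Sf x * (?ns x)\<^sup>2) / n0 + n0 * Aint) / 2"
    using int2 integrable_Sf unfolding Aint_def by simp
  also have "\<dots> = Aint * n0"
    unfolding Sf_se_int[OF K] c using n0 by (simp add: power2_eq_square field_simps)
  finally have "(LINT x|lborel. norm (hh K x)) \<le> Aint * n0" .
  then show ?thesis unfolding L1norm_eq[OF integrable_gg[of "\<lambda>_. 0" K, folded hh_gg]]
    by (rule ennreal_leI)
qed

definition rr :: "real \<Rightarrow> real \<Rightarrow> real" where
  "rr L y = (if \<bar>y\<bar> < L then Sf y else - Sf y)"

lemma rr_meas[measurable]: "rr L \<in> borel_measurable borel"
  unfolding rr_def by measurable

lemma rr_alt: "rr L y = Sf y - 2 * (indicator {y. L \<le> \<bar>y\<bar>} y * Sf y)"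
  unfolding rr_def by (auto simp: indicator_def)

lemma integrable_ind_Sf: "integrable lborel (\<lambda>y. indicator {y. L \<le> \<bar>y\<bar>} y * Sf y)"
proof -
  have "integrable lborel (\<lambda>y. Sf y * indicator {y. L \<le> \<bar>y\<bar>} y)"
    by (rule integrable_real_mult_indicator[OF _ integrable_Sf]) measurable
  then show ?thesis by (simp add: mult.commute)
qed

lemma rr_int: "(LINT y|lborel. rr L y) = Aint - 2 * TL L"
  unfolding rr_alt Aint_def TL_def
  using integrable_Sf integrable_ind_Sf by simp

lemma integrable_rr: "integrable lborel (rr L)"
  unfolding rr_alt[abs_def] using integrable_Sf integrable_ind_Sf by simp

lemma rr_shift: "(LINT x|lborel. rr L (x - c)) = (LINT y|lborel. rr L y)"
proof -
  have "(LINT y|lborel. rr L y) = \<bar>1\<bar> *\<^sub>R (LINT x|lborel. rr L (- c + 1 * x))"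
    by (rule lborel_integral_real_affine) simp
  then show ?thesis by simp
qed

lemma integrable_rr_shift: "integrable lborel (\<lambda>x. rr L (x - c))"
proof -
  have "integrable lborel (\<lambda>x. rr L (- c + 1 * x))"
    using lborel_integrable_real_affine_iff[of 1 "rr L" "-c"] integrable_rr by simp
  then show ?thesis by simp
qed

lemma gg_pointwise:
  assumes K: "finite K" and sep: "\<And>j k. j \<in> K \<Longrightarrow> k \<in> K \<Longrightarrow> j \<noteq> k \<Longrightarrow> 2 * L \<le> \<bar>a (int j) - a (int k)\<bar>"
  shows "(\<Sum>k\<in>K. rr L (x - a (int k))) \<le> norm (gg a K x)"
proof (cases "\<exists>k0\<in>K. \<bar>x - a (int k0)\<bar> < L")
  case False
  then have "(\<Sum>k\<in>K. rr L (x - a (int k))) = (\<Sum>k\<in>K. - Sf (x - a (int k)))"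
    unfolding rr_def by (intro sum.cong refl) auto
  also have "\<dots> \<le> 0" by (intro sum_nonpos) (simp add: Sf_nonneg)
  finally show ?thesis by (rule order_trans) simp
next
  case True
  then obtain k0 where k0: "k0 \<in> K" "\<bar>x - a (int k0)\<bar> < L" by blast
  have far: "\<not> \<bar>x - a (int k)\<bar> < L" if "k \<in> K - {k0}" for k
  proof
    assume "\<bar>x - a (int k)\<bar> < L"
    then have "\<bar>a (int k) - a (int k0)\<bar> < 2 * L" using k0 by linarith
    moreover have "2 * L \<le> \<bar>a (int k) - a (int k0)\<bar>" using sep[of k k0] that k0 by auto
    ultimately show False by simp
  qed
  have "(\<Sum>k\<in>K. rr L (x - a (int k))) = rr L (x - a (int k0)) + (\<Sum>k\<in>K - {k0}. rr L (x - a (int k)))"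
    using K k0 by (simp add: sum.remove)
  also have "\<dots> = Sf (x - a (int k0)) - (\<Sum>k\<in>K - {k0}. Sf (x - a (int k)))"
    using k0 far unfolding rr_def by (simp add: sum_negf[symmetric])
  also have "\<dots> \<le> norm (Sm (a (int k0)) (om k0) x) - norm (\<Sum>k\<in>K - {k0}. Sm (a (int k)) (om k) x)"
  proof -
    have "norm (\<Sum>k\<in>K - {k0}. Sm (a (int k)) (om k) x) \<le> (\<Sum>k\<in>K - {k0}. Sf (x - a (int k)))"
      by (rule order_trans[OF norm_sum]) (simp add: norm_Sm)
    then show ?thesis by (simp add: norm_Sm)
  qed
  also have "\<dots> \<le> norm (Sm (a (int k0)) (om k0) x + (\<Sum>k\<in>K - {k0}. Sm (a (int k)) (om k) x))"
    by (rule norm_diff_ineq)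
  also have "\<dots> = norm (gg a K x)"
    unfolding gg_def using K k0 by (simp add: sum.remove)
  finally show ?thesis .
qed

lemma gg_lower:
  assumes K: "finite K" and sep: "\<And>j k. j \<in> K \<Longrightarrow> k \<in> K \<Longrightarrow> j \<noteq> k \<Longrightarrow> 2 * L \<le> \<bar>a (int j) - a (int k)\<bar>"
  shows "ennreal (real (card K) * (Aint - 2 * TL L)) \<le> L1norm (gg a K)"
proof -
  have "real (card K) * (Aint - 2 * TL L) = (\<Sum>k\<in>K. LINT x|lborel. rr L (x - a (int k)))"
    by (simp add: rr_shift rr_int)
  also have "\<dots> = (LINT x|lborel. (\<Sum>k\<in>K. rr L (x - a (int k))))"
    by (rule Bochner_Integration.integral_sum[symmetric]) (rule integrable_rr_shift)
  also have "\<dots> \<le> (LINT x|lborel. norm (gg a K x))"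
    by (rule integral_mono) (auto intro!: integrable_norm integrable_gg Bochner_Integration.integrable_sum
        integrable_rr_shift gg_pointwise[where K=K and L=L and a=a, OF K sep])
  finally show ?thesis unfolding L1norm_eq[OF integrable_gg] by (rule ennreal_leI)
qed

theorem mainTheorem15:
  fixes \<psi> :: "real \<Rightarrow> real"
  assumes "admissible_psi \<psi>"
    and "\<forall>t\<in>{3/4..1}. \<psi> t = 1"
  shows "\<exists>m :: real \<Rightarrow> complex.
           continuous_on {0<..} m \<and> bounded (m ` {0<..}) \<and>
           (SUP k::int. L1norm (fourier (m_psi_k m \<psi> k))) < top \<and>
           \<not> bounded_H1_multiplier m"
proof -
  interpret psiloc \<psi> using assms by unfold_locales
  obtain L where L: "1 \<le> L" "TL L < Aint / 4" using exists_L by blast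
  define a where "a = (\<lambda>j::int. 2 * L * real_of_int j)"
  show ?thesis
  proof (intro exI[of _ "mm a"] conjI)
    show "continuous_on {0<..} (mm a)" by (rule mm_cont)
    show "bounded (mm a ` {0<..})" by (rule mm_bounded)
    show "(SUP k::int. L1norm (fourier (m_psi_k (mm a) \<psi> k))) < top" by (rule sup_bound)
    show "\<not> bounded_H1_multiplier (mm a)"
    proof
      assume "bounded_H1_multiplier (mm a)"
      then obtain C where C: "\<And>h g. H1_H2 h \<and> is_Tm (mm a) h g \<Longrightarrow> L1norm g \<le> ennreal C * L1norm h"
        unfolding bounded_H1_multiplier_def by blast
      define n0 :: nat where "n0 = nat \<lceil>2 * \<bar>C\<bar>\<rceil> + 1"
      have n0C: "2 * \<bar>C\<bar> < real n0"
      proof -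
        have c1: "2 * \<bar>C\<bar> \<le> real_of_int \<lceil>2 * \<bar>C\<bar>\<rceil>" by (rule le_of_int_ceiling)
        have c0: "0 \<le> \<lceil>2 * \<bar>C\<bar>\<rceil>" by simp
        have "real n0 = real_of_int \<lceil>2 * \<bar>C\<bar>\<rceil> + 1" unfolding n0_def using c0 by simp
        then show ?thesis using c1 by linarith
      qed
      have n0p: "0 < real n0" using n0C abs_ge_zero[of C] by linarith
      define K where "K = {4..<n0^2 + 4}"
      have Kf: "finite K" unfolding K_def by simp
      have K4: "\<forall>k\<in>K. k \<ge> 4" unfolding K_def by simp
      have cK: "real (card K) = (real n0)^2" unfolding K_def by simp
      have le: "L1norm (gg a K) \<le> ennreal C * L1norm (hh K)"
        using C H1_hh[OF K4] Tm_gg[OF K4] by blast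
      have up: "L1norm (hh K) \<le> ennreal (Aint * real n0)"
        by (rule hh_upper[OF Kf K4 n0p cK])
      have sep: "2 * L \<le> \<bar>a (int j) - a (int k)\<bar>" if "j \<in> K" "k \<in> K" "j \<noteq> k" for j k
      proof -
        have "1 \<le> \<bar>real j - real k\<bar>" using that by (cases "j < k") auto
        then have "2 * L * 1 \<le> 2 * L * \<bar>real j - real k\<bar>" using L by (intro mult_left_mono) auto
        then show ?thesis unfolding a_def using L by (simp add: abs_mult right_diff_distrib[symmetric])
      qed
      have low: "ennreal (real (card K) * (Aint - 2 * TL L)) \<le> L1norm (gg a K)"
        by (rule gg_lower[where K=K and L=L and a=a, OF Kf sep])
      have Ap: "0 < Aint" by (rule Aint_pos)
      define C' where "C' = max C 0"
      have C'0: "0 \<le> C'" unfolding C'_def by simp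
      have "ennreal C * L1norm (hh K) \<le> ennreal C' * ennreal (Aint * real n0)"
        by (intro mult_mono up) (auto simp: C'_def ennreal_leI)
      also have "\<dots> = ennreal (C' * (Aint * real n0))"
        using C'0 Ap by (simp add: ennreal_mult)
      also have "\<dots> < ennreal (real (card K) * (Aint - 2 * TL L))"
      proof (rule ennreal_lessI)
        have c1: "C' < real n0 / 2" using n0C unfolding C'_def by auto
        have "C' * (Aint * real n0) < real n0 / 2 * (Aint * real n0)"
          using c1 Ap n0p by (intro mult_strict_right_mono) auto
        also have "\<dots> = (real n0)^2 * (Aint / 2)" by (simp add: power2_eq_square)
        also have "\<dots> < (real n0)^2 * (Aint - 2 * TL L)"
          using L(2) n0p by (intro mult_strict_left_mono) auto
        finally show "C' * (Aint * real n0) < real (card K) * (Aint - 2 * TL L)" unfolding cK .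
        then show "0 < real (card K) * (Aint - 2 * TL L)"
          using C'0 Ap n0p by (smt (verit) mult_nonneg_nonneg)
      qed
      also have "\<dots> \<le> L1norm (gg a K)" by (rule low)
      finally show False using le by simp
    qed
  qed
qed

end
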